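(* Let $\mathcal{F}$ be an argumentation framework and $S\subseteq A_{\mathcal{F}}$. If $\beta$ is an ordinal with $\beta>\alpha_S(a)$ for every $a\in A_{\mathcal{F}}$, then $\Delta_{\mathcal{F},S}=\Delta^\beta_{\mathcal{F},S}$.
   Context: An argumentation framework is $\mathcal{F}=(A_{\mathcal{F}},R_{\mathcal{F}})$ with $R_{\mathcal{F}}\subseteq A_{\mathcal{F}}\times A_{\mathcal{F}}$; $a\rightarrow b$ means $(a,b)\in R_{\mathcal{F}}$. $\mathcal{F}|_B=(A_{\mathcal{F}}\cap B,R_{\mathcal{F}}\cap(B\times B))$. $\mathrm{SCC}(a)$ is the set of $b$ with directed attack paths (possibly of length 0) from $a$ to $b$ and back. $D_S(X)=\{b\in X:\exists a\in S\setminus X,\ a\rightarrow b\}$. $C^0_S(a)=\mathrm{SCC}(a)$; $C^{\alpha+1}_S(a)$ = the strongly connected component of $a$ in $\mathcal{F}|_{C^\alpha_S(a)\setminus D_S(C^\alpha_S(a))}$ (empty if $a$ is not in that set); for limit $\lambda$, $C^\lambda_S(a)$ = the component of $a$ in $\mathcal{F}|_{\bigcap_{\alpha<\lambda}C^\alpha_S(a)}$. $\alpha_S(a)$ is the least ordinal $\alpha$ such that $a\notin C^\alpha_S(a)$ or $C^{\alpha+1}_S(a)=C^\alpha_S(a)$. $a\Rightarrow^B_{\mathcal{F}}b$ means there is a directed attack path from $a$ to $b$ in $\mathcal{F}|_B$. For $D\subseteq A_{\mathcal{F}}$, $\Delta_{\mathcal{F},S}(D)=\{a\in A_{\mathcal{F}}:\exists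 b\in S\,(b\rightarrow a\text{ and not }a\Rightarrow^{A_{\mathcal{F}}\setminus D}_{\mathcal{F}}b)\}$; this operator on subsets of $A_{\mathcal{F}}$ is monotone and $\Delta_{\mathcal{F},S}$ (as a set) denotes its least fixed point. Iterates: $\Delta^0_{\mathcal{F},S}=\emptyset$, $\Delta^{\alpha+1}_{\mathcal{F},S}=\Delta_{\mathcal{F},S}(\Delta^\alpha_{\mathcal{F},S})$, $\Delta^\lambda_{\mathcal{F},S}=\bigcup_{\alpha<\lambda}\Delta^\alpha_{\mathcal{F},S}$ for limit $\lambda$. *)

theory Defs
  imports Main
begin

text \<open>Ordinals are represented as elements of a type of class wellorder; every
ordinal below the order type of the index type is such an element.\<close>

definition is_zero_ord :: "'o::wellorder \<Rightarrow> bool" where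
  "is_zero_ord x \<longleftrightarrow> (\<forall>y. x \<le> y)"

definition is_succ_ord :: "'o::wellorder \<Rightarrow> bool" where
  "is_succ_ord x \<longleftrightarrow> (\<exists>y. y < x \<and> (\<forall>w. w < x \<longrightarrow> w \<le> y))"

definition pred_ord :: "'o::wellorder \<Rightarrow> 'o" where
  "pred_ord x = (THE y. y < x \<and> (\<forall>w. w < x \<longrightarrow> w \<le> y))"

definition ord_rec :: "'b \<Rightarrow> ('b \<Rightarrow> 'b) \<Rightarrow> (('o \<Rightarrow> 'b) \<Rightarrow> 'o \<Rightarrow> 'b) \<Rightarrow> 'o::wellorder \<Rightarrow> 'b" where
  "ord_rec z s l = wfrec {(y, x). y < x}
     (\<lambda>f x. if is_zero_ord x then z
            else if is_succ_ord x then s (f (pred_ord x))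
            else l f x)"

definition reach :: "'a set \<Rightarrow> ('a \<times> 'a) set \<Rightarrow> 'a set \<Rightarrow> 'a \<Rightarrow> 'a \<Rightarrow> bool" where
  "reach A R B a b \<longleftrightarrow> a \<in> A \<inter> B \<and> (a, b) \<in> (R \<inter> (B \<times> B))\<^sup>*"

text \<open>Strongly connected component of a in F restricted to B (empty if a not in A \<inter> B).\<close>
definition scc_in :: "'a set \<Rightarrow> ('a \<times> 'a) set \<Rightarrow> 'a set \<Rightarrow> 'a \<Rightarrow> 'a set" where
  "scc_in A R B a = {b. reach A R B a b \<and> reach A R B b a}"

definition D_S :: "('a \<times> 'a) set \<Rightarrow> 'a set \<Rightarrow> 'a set \<Rightarrow> 'a set" where
  "D_S R S X = {b \<in> X. \<exists>c \<in> S - X. (c, b) \<in> R}"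

definition C_S :: "'a set \<Rightarrow> ('a \<times> 'a) set \<Rightarrow> 'a set \<Rightarrow> 'a \<Rightarrow> 'o::wellorder \<Rightarrow> 'a set" where
  "C_S A R S a = ord_rec (scc_in A R A a)
      (\<lambda>X. scc_in A R (X - D_S R S X) a)
      (\<lambda>f x. scc_in A R (\<Inter>{f y | y. y < x}) a)"

text \<open>Stopping condition: a \<notin> C^g or C^(g+1) = C^g (C^(g+1) written out by its definition).\<close>
definition alpha_stop :: "'a set \<Rightarrow> ('a \<times> 'a) set \<Rightarrow> 'a set \<Rightarrow> 'a \<Rightarrow> 'o::wellorder \<Rightarrow> bool" where
  "alpha_stop A R S a g \<longleftrightarrow>
     (let X = C_S A R S a g in a \<notin> X \<or> scc_in A R (X - D_S R S X) a = X)"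

definition alpha_S :: "'a set \<Rightarrow> ('a \<times> 'a) set \<Rightarrow> 'a set \<Rightarrow> 'a \<Rightarrow> 'o::wellorder" where
  "alpha_S A R S a = (LEAST g. alpha_stop A R S a g)"

definition DeltaOp :: "'a set \<Rightarrow> ('a \<times> 'a) set \<Rightarrow> 'a set \<Rightarrow> 'a set \<Rightarrow> 'a set" where
  "DeltaOp A R S D = {a \<in> A. \<exists>b \<in> S. (b, a) \<in> R \<and> \<not> reach A R (A - D) a b}"

definition Delta_lfp :: "'a set \<Rightarrow> ('a \<times> 'a) set \<Rightarrow> 'a set \<Rightarrow> 'a set" where
  "Delta_lfp A R S = lfp (DeltaOp A R S)"

definition Delta_iter :: "'a set \<Rightarrow> ('a \<times> 'a) set \<Rightarrow> 'a set \<Rightarrow> 'o::wellorder \<Rightarrow> 'a set" where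
  "Delta_iter A R S = ord_rec {} (DeltaOp A R S) (\<lambda>f x. \<Union>{f y | y. y < x})"

end

theory Submission imports Defs begin

lemma ord_rec_unfold:
  "ord_rec z s l (x::'o::wellorder) = (if is_zero_ord x then z
            else if is_succ_ord x then s (cut (ord_rec z s l) {(y, x). y < x} x (pred_ord x))
            else l (cut (ord_rec z s l) {(y, x). y < x} x) x)"
  unfolding ord_rec_def
  by (subst wfrec[OF wellorder_class.wf]) simp

lemma pred_ord_prop:
  assumes "is_succ_ord (x::'o::wellorder)"
  shows "pred_ord x < x" "\<And>w. w < x \<Longrightarrow> w \<le> pred_ord x"
proof -
  obtain y where y: "y < x" "\<forall>w. w < x \<longrightarrow> w \<le> y" using assms unfolding is_succ_ord_def by blast
  have "pred_ord x = y" unfolding pred_ord_def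
  proof (rule the_equality)
    show "y < x \<and> (\<forall>w. w < x \<longrightarrow> w \<le> y)" using y by blast
    fix y' assume h: "y' < x \<and> (\<forall>w. w < x \<longrightarrow> w \<le> y')"
    then have "y' \<le> y" "y \<le> y'" using y by auto
    then show "y' = y" by (rule order.antisym)
  qed
  then show "pred_ord x < x" "\<And>w. w < x \<Longrightarrow> w \<le> pred_ord x" using y by auto
qed

lemma ord_rec_zero: "is_zero_ord x \<Longrightarrow> ord_rec z s l x = z"
  by (subst ord_rec_unfold) simp

lemma ord_rec_succ: "\<not> is_zero_ord x \<Longrightarrow> is_succ_ord x \<Longrightarrow> ord_rec z s l x = s (ord_rec z s l (pred_ord x))"
  by (subst ord_rec_unfold) (simp add: cut_apply pred_ord_prop)

lemma ord_rec_lim: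
  assumes "\<not> is_zero_ord x" "\<not> is_succ_ord x"
    and "\<And>f g. (\<And>y. y < x \<Longrightarrow> f y = g y) \<Longrightarrow> l f x = l g x"
  shows "ord_rec z s l x = l (ord_rec z s l) x"
proof -
  have "ord_rec z s l x = l (cut (ord_rec z s l) {(y, x). y < x} x) x"
    using assms(1,2) by (subst ord_rec_unfold) simp
  also have "\<dots> = l (ord_rec z s l) x"
    by (rule assms(3)) (simp add: cut_apply)
  finally show ?thesis .
qed


lemma ord_cases3:
  obtains "is_zero_ord (x::'o::wellorder)" | "\<not> is_zero_ord x" "is_succ_ord x" | "\<not> is_zero_ord x" "\<not> is_succ_ord x"
  by blast

lemma not_zero_ex: "\<not> is_zero_ord (x::'o::wellorder) \<Longrightarrow> \<exists>y. y < x"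
  unfolding is_zero_ord_def by (meson not_le)

lemma zero_le: "is_zero_ord (x::'o::wellorder) \<Longrightarrow> y \<le> x \<Longrightarrow> y = x"
  unfolding is_zero_ord_def by (meson antisym)

lemma lim_between: "\<not> is_succ_ord (x::'o::wellorder) \<Longrightarrow> y < x \<Longrightarrow> \<exists>z. y < z \<and> z < x"
  unfolding is_succ_ord_def by (meson not_le)

lemma reach_mono: "Y \<subseteq> B \<Longrightarrow> reach A R Y a b \<Longrightarrow> reach A R B a b"
proof -
  assume YB: "Y \<subseteq> B" and r: "reach A R Y a b"
  have sub: "R \<inter> Y \<times> Y \<subseteq> R \<inter> B \<times> B" using YB by blast
  have "(a, b) \<in> (R \<inter> Y \<times> Y)\<^sup>*" "a \<in> A" "a \<in> Y" using r unfolding reach_def by auto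
  then show ?thesis using rtrancl_mono[OF sub] YB unfolding reach_def by blast
qed

lemma scc_mono: "Y \<subseteq> B \<Longrightarrow> scc_in A R Y a \<subseteq> scc_in A R B a"
  unfolding scc_in_def using reach_mono by fastforce

lemma scc_sub_B: "scc_in A R B a \<subseteq> B"
  unfolding scc_in_def reach_def by auto

lemma reach_trans: "reach A R B a b \<Longrightarrow> reach A R B b c \<Longrightarrow> reach A R B a c"
  unfolding reach_def by auto

lemma reach_refl: "a \<in> A \<Longrightarrow> a \<in> B \<Longrightarrow> reach A R B a a"
  unfolding reach_def by auto

lemma reach_end: "R \<subseteq> A \<times> A \<Longrightarrow> reach A R B a b \<Longrightarrow> b \<in> A \<and> b \<in> B"
proof -
  assume RA: "R \<subseteq> A \<times> A" and r: "reach A R B a b"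
  have p: "(a, b) \<in> (R \<inter> B \<times> B)\<^sup>*" and aA: "a \<in> A" "a \<in> B" using r unfolding reach_def by auto
  from p show ?thesis
  proof (cases rule: rtranclE)
    case base then show ?thesis using aA by simp
  next
    case (step y) then show ?thesis using RA by blast
  qed
qed

lemma path_in_scc:
  assumes RA: "R \<subseteq> A \<times> A"
  shows "(x, c) \<in> (R \<inter> B \<times> B)\<^sup>* \<Longrightarrow> (c, a) \<in> (R \<inter> B \<times> B)\<^sup>* \<Longrightarrow> x \<in> scc_in A R B a
     \<Longrightarrow> scc_in A R B a \<subseteq> Y \<Longrightarrow> (x, c) \<in> (R \<inter> Y \<times> Y)\<^sup>*"
proof (induction rule: rtrancl_induct)
  case base
  then show ?case by simp
next
  case (step c d)
  have ca: "(c, a) \<in> (R \<inter> B \<times> B)\<^sup>*"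
    using step.hyps(2) step.prems(1) by (rule converse_rtrancl_into_rtrancl)
  have IH: "(x, c) \<in> (R \<inter> Y \<times> Y)\<^sup>*" using step.IH[OF ca step.prems(2) step.prems(3)] .
  have xa: "reach A R B a x" "reach A R B x a" using step.prems(2) unfolding scc_in_def by simp_all
  have xAB: "x \<in> A" "x \<in> B" using xa(2) unfolding reach_def by simp_all
  have cd: "(c, d) \<in> R" "c \<in> B" "d \<in> B" using step.hyps(2) by simp_all
  have cA: "c \<in> A" "d \<in> A" using cd(1) RA by auto
  have r1: "reach A R B x c" using xAB step.hyps(1) unfolding reach_def by simp
  have r2: "reach A R B c a" using cA cd ca unfolding reach_def by simp
  have c_in: "c \<in> scc_in A R B a" using reach_trans[OF xa(1) r1] r2 unfolding scc_in_def by simp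
  have xd: "(x, d) \<in> (R \<inter> B \<times> B)\<^sup>*" using step.hyps(1) step.hyps(2) by (rule rtrancl_into_rtrancl)
  have r3: "reach A R B x d" using xAB xd unfolding reach_def by simp
  have r4: "reach A R B d a" using cA cd step.prems(1) unfolding reach_def by simp
  have d_in: "d \<in> scc_in A R B a" using reach_trans[OF xa(1) r3] r4 unfolding scc_in_def by simp
  have "c \<in> Y" "d \<in> Y" using c_in d_in step.prems(3) by auto
  then have "(c, d) \<in> R \<inter> Y \<times> Y" using cd by simp
  then show ?case using IH by (rule rtrancl_into_rtrancl[rotated])
qed

lemma scc_sub:
  assumes RA: "R \<subseteq> A \<times> A" and "Y \<subseteq> B" and sY: "scc_in A R B a \<subseteq> Y"
  shows "scc_in A R Y a = scc_in A R B a"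
proof
  show "scc_in A R Y a \<subseteq> scc_in A R B a" using scc_mono assms(2) .
  show "scc_in A R B a \<subseteq> scc_in A R Y a"
  proof
    fix b assume b: "b \<in> scc_in A R B a"
    then have ab: "reach A R B a b" "reach A R B b a" unfolding scc_in_def by auto
    have ain: "a \<in> scc_in A R B a" using ab unfolding scc_in_def reach_def by auto
    have "(a, b) \<in> (R \<inter> Y \<times> Y)\<^sup>*"
      using path_in_scc[OF RA, of a b B a Y] ab ain sY unfolding reach_def by auto
    moreover have "(b, a) \<in> (R \<inter> Y \<times> Y)\<^sup>*"
      using path_in_scc[OF RA, of b a B a Y] ab b sY unfolding reach_def by auto
    moreover have "a \<in> Y" "b \<in> Y" "a \<in> A" "b \<in> A" using ain b sY ab unfolding reach_def by auto
    ultimately show "b \<in> scc_in A R Y a" unfolding scc_in_def reach_def by auto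
  qed
qed

lemma DeltaOp_mono: "D \<subseteq> D' \<Longrightarrow> DeltaOp A R S D \<subseteq> DeltaOp A R S D'"
  unfolding DeltaOp_def using reach_mono[of "A - D'" "A - D" A R] by blast

lemma mono_DeltaOp: "mono (DeltaOp A R S)"
  using DeltaOp_mono by (metis monoI)

lemma Delta_zero: "is_zero_ord x \<Longrightarrow> Delta_iter A R S x = {}"
  unfolding Delta_iter_def by (rule ord_rec_zero)

lemma Delta_succ: "\<not> is_zero_ord x \<Longrightarrow> is_succ_ord x \<Longrightarrow>
   Delta_iter A R S x = DeltaOp A R S (Delta_iter A R S (pred_ord x))"
  unfolding Delta_iter_def by (rule ord_rec_succ)

lemma Delta_lim: "\<not> is_zero_ord x \<Longrightarrow> \<not> is_succ_ord x \<Longrightarrow>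
   Delta_iter A R S x = \<Union>{Delta_iter A R S y | y. y < x}"
  unfolding Delta_iter_def by (rule ord_rec_lim) auto

lemma C_zero: "is_zero_ord x \<Longrightarrow> C_S A R S a x = scc_in A R A a"
  unfolding C_S_def by (rule ord_rec_zero)

lemma C_succ: "\<not> is_zero_ord x \<Longrightarrow> is_succ_ord x \<Longrightarrow>
   C_S A R S a x = (let X = C_S A R S a (pred_ord x) in scc_in A R (X - D_S R S X) a)"
  unfolding C_S_def Let_def by (rule ord_rec_succ)

lemma C_lim:
  assumes "\<not> is_zero_ord (x::'o::wellorder)" "\<not> is_succ_ord x"
  shows "C_S A R S a x = scc_in A R (\<Inter>{C_S A R S a y | y. y < x}) a"
  unfolding C_S_def
proof (rule ord_rec_lim[OF assms])
  fix f g :: "'o \<Rightarrow> 'a set" assume h: "\<And>y. y < x \<Longrightarrow> f y = g y"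
  then have "{f y |y. y < x} = {g y |y. y < x}" by force
  then show "scc_in A R (\<Inter>{f y |y. y < x}) a = scc_in A R (\<Inter>{g y |y. y < x}) a" by simp
qed

lemma Delta_inc: "Delta_iter A R S (x::'o::wellorder) \<subseteq> DeltaOp A R S (Delta_iter A R S x)"
proof (induction x rule: less_induct)
  case (less x)
  show ?case
  proof (cases x rule: ord_cases3)
    case 1 then show ?thesis by (simp add: Delta_zero)
  next
    case 2
    have "Delta_iter A R S (pred_ord x) \<subseteq> DeltaOp A R S (Delta_iter A R S (pred_ord x))"
      using less.IH[OF pred_ord_prop(1)[OF 2(2)]] .
    then have "DeltaOp A R S (Delta_iter A R S (pred_ord x)) \<subseteq> DeltaOp A R S (DeltaOp A R S (Delta_iter A R S (pred_ord x)))"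
      by (rule DeltaOp_mono)
    then show ?thesis unfolding Delta_succ[OF 2] .
  next
    case 3
    have *: "Delta_iter A R S y \<subseteq> DeltaOp A R S (Delta_iter A R S x)" if "y < x" for y
    proof -
      have "Delta_iter A R S y \<subseteq> \<Union>{Delta_iter A R S y | y. y < x}" using that by blast
      then have yx: "Delta_iter A R S y \<subseteq> Delta_iter A R S x" unfolding Delta_lim[OF 3] .
      have "Delta_iter A R S y \<subseteq> DeltaOp A R S (Delta_iter A R S y)" using less.IH[OF that] .
      also have "\<dots> \<subseteq> DeltaOp A R S (Delta_iter A R S x)" using yx by (rule DeltaOp_mono)
      finally show ?thesis .
    qed
    have "Delta_iter A R S x = \<Union>{Delta_iter A R S y | y. y < x}" by (rule Delta_lim[OF 3])
    also have "\<dots> \<subseteq> DeltaOp A R S (Delta_iter A R S x)" using * by blast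
    finally show ?thesis .
  qed
qed

lemma Delta_mono: "(y::'o::wellorder) \<le> x \<Longrightarrow> Delta_iter A R S y \<subseteq> Delta_iter A R S x"
proof (induction x rule: less_induct)
  case (less x)
  show ?case
  proof (cases "y = x")
    case True then show ?thesis by simp
  next
    case False
    then have yx: "y < x" using less.prems by simp
    show ?thesis
    proof (cases x rule: ord_cases3)
      case 1 then have "y = x" using zero_le less.prems by blast
      then show ?thesis by simp
    next
      case 2
      have px: "pred_ord x < x" using pred_ord_prop(1)[OF 2(2)] .
      have "y \<le> pred_ord x" using pred_ord_prop(2)[OF 2(2) yx] .
      then have "Delta_iter A R S y \<subseteq> Delta_iter A R S (pred_ord x)"
        by (rule less.IH[OF px])
      also have "\<dots> \<subseteq> DeltaOp A R S (Delta_iter A R S (pred_ord x))" by (rule Delta_inc)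
      also have "\<dots> = Delta_iter A R S x" by (rule Delta_succ[OF 2, symmetric])
      finally show ?thesis .
    next
      case 3
      have "Delta_iter A R S y \<subseteq> \<Union>{Delta_iter A R S y | y. y < x}" using yx by blast
      then show ?thesis unfolding Delta_lim[OF 3] .
    qed
  qed
qed

lemma Delta_le_lfp: "Delta_iter A R S (x::'o::wellorder) \<subseteq> Delta_lfp A R S"
proof (induction x rule: less_induct)
  case (less x)
  show ?case
  proof (cases x rule: ord_cases3)
    case 1 then show ?thesis by (simp add: Delta_zero)
  next
    case 2
    have "Delta_iter A R S (pred_ord x) \<subseteq> Delta_lfp A R S"
      using less.IH[OF pred_ord_prop(1)[OF 2(2)]] .
    then have "DeltaOp A R S (Delta_iter A R S (pred_ord x)) \<subseteq> DeltaOp A R S (Delta_lfp A R S)"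
      by (rule DeltaOp_mono)
    also have "\<dots> = Delta_lfp A R S" unfolding Delta_lfp_def by (rule lfp_fixpoint[OF mono_DeltaOp])
    finally show ?thesis unfolding Delta_succ[OF 2] .
  next
    case 3
    have "\<Union>{Delta_iter A R S y | y. y < x} \<subseteq> Delta_lfp A R S" using less.IH by blast
    then show ?thesis unfolding Delta_lim[OF 3] .
  qed
qed

lemma C_inv:
  assumes RA: "R \<subseteq> A \<times> A" and aA: "a \<in> A"
  shows "a \<notin> Delta_iter A R S (x::'o::wellorder) \<Longrightarrow> C_S A R S a x = scc_in A R (A - Delta_iter A R S x) a"
proof (induction x rule: less_induct)
  case (less x)
  show ?case
  proof (cases x rule: ord_cases3)
    case 1 then show ?thesis by (simp add: Delta_zero C_zero)
  next
    case 2
    define p where "p = pred_ord x"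
    have px: "p < x" unfolding p_def by (rule pred_ord_prop(1)[OF 2(2)])
    define Dp where "Dp = Delta_iter A R S p"
    define Dx where "Dx = Delta_iter A R S x"
    have DxOp: "Dx = DeltaOp A R S Dp" unfolding Dx_def Dp_def p_def by (rule Delta_succ[OF 2])
    have DpDx: "Dp \<subseteq> Dx" unfolding Dp_def Dx_def using less_imp_le[OF px] by (rule Delta_mono)
    have aDx: "a \<notin> Dx" unfolding Dx_def by (rule less.prems)
    have aDp: "a \<notin> Dp" using DpDx aDx by blast
    define X where "X = C_S A R S a p"
    have X: "X = scc_in A R (A - Dp) a" unfolding X_def Dp_def
      by (rule less.IH[OF px]) (simp add: aDp[unfolded Dp_def])
    have XB: "X \<subseteq> A - Dp" unfolding X by (rule scc_sub_B)
    have inX: "c \<in> X \<longleftrightarrow> reach A R (A - Dp) a c \<and> reach A R (A - Dp) c a" for c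
      unfolding X scc_in_def by simp
    have key: "c \<in> D_S R S X \<longleftrightarrow> c \<in> Dx" if cX: "c \<in> X" for c
    proof
      assume "c \<in> D_S R S X"
      then obtain b where b: "b \<in> S" "b \<notin> X" "(b, c) \<in> R" unfolding D_S_def by blast
      have cB: "c \<in> A - Dp" using cX XB by blast
      have "\<not> reach A R (A - Dp) c b"
      proof
        assume rcb: "reach A R (A - Dp) c b"
        have bB: "b \<in> A" "b \<in> A - Dp" using reach_end[OF RA rcb] by auto
        have "(b, c) \<in> R \<inter> (A - Dp) \<times> (A - Dp)" using bB cB b(3) by blast
        then have rbc: "reach A R (A - Dp) b c" using bB unfolding reach_def by blast
        have ac: "reach A R (A - Dp) a c" "reach A R (A - Dp) c a" using cX inX by blast+
        have "reach A R (A - Dp) a b" using ac(1) rcb by (rule reach_trans)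
        moreover have "reach A R (A - Dp) b a" using rbc ac(2) by (rule reach_trans)
        ultimately have "b \<in> X" using inX by blast
        then show False using b(2) by simp
      qed
      then show "c \<in> Dx" using DxOp b cB unfolding DeltaOp_def by blast
    next
      assume "c \<in> Dx"
      then obtain b where b: "b \<in> S" "(b, c) \<in> R" "\<not> reach A R (A - Dp) c b"
        using DxOp unfolding DeltaOp_def by blast
      have "b \<notin> X"
      proof
        assume "b \<in> X"
        then have ab: "reach A R (A - Dp) a b" using inX by blast
        have ca: "reach A R (A - Dp) c a" using cX inX by blast
        have "reach A R (A - Dp) c b" using ca ab by (rule reach_trans)
        then show False using b(3) by simp
      qed
      then show "c \<in> D_S R S X" using b cX unfolding D_S_def by blast
    qed
    have eq: "X - D_S R S X = X - Dx" using key by blast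
    have "C_S A R S a x = scc_in A R (X - D_S R S X) a"
      using C_succ[OF 2, of A R S a] unfolding X_def p_def Let_def .
    also have "\<dots> = scc_in A R (X - Dx) a" unfolding eq ..
    also have "\<dots> = scc_in A R (A - Dx) a"
    proof (rule scc_sub[OF RA])
      show "X - Dx \<subseteq> A - Dx" using XB by blast
      have "scc_in A R (A - Dx) a \<subseteq> scc_in A R (A - Dp) a" by (rule scc_mono) (use DpDx in blast)
      then have "scc_in A R (A - Dx) a \<subseteq> X" unfolding X .
      moreover have "scc_in A R (A - Dx) a \<subseteq> A - Dx" by (rule scc_sub_B)
      ultimately show "scc_in A R (A - Dx) a \<subseteq> X - Dx" by blast
    qed
    finally show ?thesis unfolding Dx_def .
  next
    case 3
    define Y where "Y = \<Inter>{C_S A R S a y | y. y < x}"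
    have DyDx: "Delta_iter A R S y \<subseteq> Delta_iter A R S x" if "y < x" for y
      using less_imp_le[OF that] by (rule Delta_mono)
    have Cy: "C_S A R S a y = scc_in A R (A - Delta_iter A R S y) a" if "y < x" for y
    proof (rule less.IH[OF that])
      show "a \<notin> Delta_iter A R S y" using DyDx[OF that] less.prems by blast
    qed
    have "C_S A R S a x = scc_in A R Y a" unfolding Y_def by (rule C_lim[OF 3])
    also have "\<dots> = scc_in A R (A - Delta_iter A R S x) a"
    proof (rule scc_sub[OF RA])
      obtain y0 where y0: "y0 < x" using not_zero_ex[OF 3(1)] by blast
      show "Y \<subseteq> A - Delta_iter A R S x"
      proof
        fix c assume cY: "c \<in> Y"
        have "c \<in> A - Delta_iter A R S y" if "y < x" for y
        proof -
          have "c \<in> C_S A R S a y" using cY that unfolding Y_def by blast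
          then have "c \<in> scc_in A R (A - Delta_iter A R S y) a" unfolding Cy[OF that] .
          then show ?thesis using scc_sub_B[of A R "A - Delta_iter A R S y" a] by blast
        qed
        then have "c \<in> A" using y0 by blast
        moreover have "c \<notin> \<Union>{Delta_iter A R S y | y. y < x}"
        proof
          assume "c \<in> \<Union>{Delta_iter A R S y | y. y < x}"
          then obtain y where "y < x" "c \<in> Delta_iter A R S y" by blast
          then show False using \<open>\<And>y. y < x \<Longrightarrow> c \<in> A - Delta_iter A R S y\<close> by blast
        qed
        ultimately
        show "c \<in> A - Delta_iter A R S x" unfolding Delta_lim[OF 3] by blast
      qed
      have "scc_in A R (A - Delta_iter A R S x) a \<subseteq> C_S A R S a y" if "y < x" for y
      proof -
        have "scc_in A R (A - Delta_iter A R S x) a \<subseteq> scc_in A R (A - Delta_iter A R S y) a"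
          by (rule scc_mono) (use DyDx[OF that] in blast)
        then show ?thesis unfolding Cy[OF that] .
      qed
      then show "scc_in A R (A - Delta_iter A R S x) a \<subseteq> Y" unfolding Y_def by blast
    qed
    finally show ?thesis .
  qed
qed

lemma stable_notin:
  assumes XX: "scc_in A R X a = X" and DS: "D_S R S X = {}" and XD: "X \<inter> D = {}"
    and cX: "c \<in> X"
  shows "c \<notin> DeltaOp A R S D"
proof
  assume "c \<in> DeltaOp A R S D"
  then obtain b where b: "b \<in> S" "(b, c) \<in> R" "\<not> reach A R (A - D) c b"
    unfolding DeltaOp_def by blast
  show False
  proof (cases "b \<in> X")
    case True
    have "c \<in> scc_in A R X a" using cX by (simp add: XX)
    then have c1: "reach A R X c a" unfolding scc_in_def by simp
    have "b \<in> scc_in A R X a" using True by (simp add: XX)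
    then have b1: "reach A R X a b" unfolding scc_in_def by simp
    have "reach A R X c b" using c1 b1 by (rule reach_trans)
    have "X \<subseteq> A"
    proof
      fix y assume "y \<in> X"
      then have "y \<in> scc_in A R X a" by (simp add: XX)
      then have "reach A R X y a" unfolding scc_in_def by simp
      then show "y \<in> A" unfolding reach_def by simp
    qed
    then have "X \<subseteq> A - D" using XD by blast
    then have "reach A R (A - D) c b" using \<open>reach A R X c b\<close> by (rule reach_mono)
    then show False using b(3) by simp
  next
    case False
    then have "c \<in> D_S R S X" using b cX unfolding D_S_def by blast
    then show False using DS by simp
  qed
qed

theorem lemma3:
  fixes A :: "'a set" and R :: "('a \<times> 'a) set" and S :: "'a set" and \<beta> :: "'o::wellorder"
  assumes "R \<subseteq> A \<times> A"
    and "S \<subseteq> A"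
    and "\<forall>a \<in> A. (\<exists>g::'o. alpha_stop A R S a g) \<and> (alpha_S A R S a :: 'o) < \<beta>"
  shows "Delta_lfp A R S = Delta_iter A R S \<beta>"
proof
  show "Delta_iter A R S \<beta> \<subseteq> Delta_lfp A R S" by (rule Delta_le_lfp)
  have "DeltaOp A R S (Delta_iter A R S \<beta>) \<subseteq> Delta_iter A R S \<beta>"
  proof
    fix a assume aop: "a \<in> DeltaOp A R S (Delta_iter A R S \<beta>)"
    show "a \<in> Delta_iter A R S \<beta>"
    proof (rule ccontr)
      assume anb: "a \<notin> Delta_iter A R S \<beta>"
      have aA: "a \<in> A" using aop unfolding DeltaOp_def by blast
      define g :: 'o where "g = alpha_S A R S a"
      have ex: "\<exists>g::'o. alpha_stop A R S a g" using assms(3) aA by blast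
      have stop: "alpha_stop A R S a g" unfolding g_def alpha_S_def using ex by (rule LeastI_ex)
      have gb: "g < \<beta>" using assms(3) aA unfolding g_def by blast
      have "Delta_iter A R S g \<subseteq> Delta_iter A R S \<beta>" using less_imp_le[OF gb] by (rule Delta_mono)
      then have ang: "a \<notin> Delta_iter A R S g" using anb by blast
      define X where "X = C_S A R S a g"
      have X: "X = scc_in A R (A - Delta_iter A R S g) a"
        using C_inv[OF assms(1) aA ang] X_def by simp
      have XsubA: "X \<subseteq> A - Delta_iter A R S g" unfolding X by (rule scc_sub_B)
      have aX: "a \<in> X" using X aA ang unfolding scc_in_def reach_def by auto
      have "a \<notin> X \<or> scc_in A R (X - D_S R S X) a = X"
        using stop unfolding alpha_stop_def X_def Let_def .
      then have st: "scc_in A R (X - D_S R S X) a = X" using aX by blast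
      have "X \<subseteq> X - D_S R S X" using scc_sub_B[of A R "X - D_S R S X" a] unfolding st .
      moreover have "D_S R S X \<subseteq> X" unfolding D_S_def by blast
      ultimately have DS: "D_S R S X = {}" by blast
      have "scc_in A R X a = scc_in A R (A - Delta_iter A R S g) a"
        using scc_sub[OF assms(1) XsubA, of a] X by simp
      then have XX: "scc_in A R X a = X" using X by simp
      have inv: "g \<le> \<gamma> \<Longrightarrow> X \<inter> Delta_iter A R S \<gamma> = {}" for \<gamma>
      proof (induction \<gamma> rule: less_induct)
        case (less x)
        show ?case
        proof (cases "x = g")
          case True then show ?thesis using XsubA by blast
        next
          case False
          then have gx: "g < x" using less.prems by simp
          show ?thesis
          proof (cases x rule: ord_cases3)
            case 1 then have "g = x" using zero_le less.prems by blast
            then show ?thesis using False by simp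
          next
            case 2
            have px: "pred_ord x < x" using pred_ord_prop(1)[OF 2(2)] .
            have "g \<le> pred_ord x" using pred_ord_prop(2)[OF 2(2) gx] .
            then have Xp: "X \<inter> Delta_iter A R S (pred_ord x) = {}"
              by (rule less.IH[OF px])
            have "c \<notin> DeltaOp A R S (Delta_iter A R S (pred_ord x))" if "c \<in> X" for c
              using stable_notin[OF XX DS Xp that] .
            then show ?thesis unfolding Delta_succ[OF 2] by blast
          next
            case 3
            have *: "X \<inter> Delta_iter A R S y = {}" if "y < x" for y
            proof (cases "g \<le> y")
              case True then show ?thesis by (rule less.IH[OF that])
            next
              case False
              then have "Delta_iter A R S y \<subseteq> Delta_iter A R S g" by (intro Delta_mono) simp
              then show ?thesis using XsubA by blast
            qed
            have "X \<inter> \<Union>{Delta_iter A R S y | y. y < x} = {}" using * by blast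
            then show ?thesis unfolding Delta_lim[OF 3] .
          qed
        qed
      qed
      have "X \<inter> Delta_iter A R S \<beta> = {}" using inv gb by simp
      then show False using stable_notin[OF XX DS _ aX] aop by simp
    qed
  qed
  then show "Delta_lfp A R S \<subseteq> Delta_iter A R S \<beta>"
    unfolding Delta_lfp_def by (rule lfp_lowerbound)
qed

end
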